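(* For any positive integers $k,\Delta$ with $3 \le k\le \Delta$ and any positive integers $x_1,\dots,x_k$ with $1\le x_j \le \Delta$, $$ \frac2{\Delta-1} \sum_{1\le i<j \le k} \frac1{x_i+x_j+2k-4} \le \sum_{j=1}^k \frac1{x_j+k} \le \frac{\Delta+3}{4} \sum_{1\le i<j \le k} \frac1{x_i+x_j+2k-4} \, . $$ *)

theory Defs
  imports Complex_Main
begin

end

theory Submission
  imports Defs
begin

lemma pair_sum:
  fixes h :: "nat \<Rightarrow> real"
  shows "(\<Sum>(i,j)\<in>{(i,j). 1 \<le> i \<and> i < j \<and> j \<le> n}. h i + h j) = real (n-1) * (\<Sum>j=1..n. h j)"
proof (induction n)
  case 0
  have "{(i,j). 1 \<le> i \<and> i < j \<and> j \<le> (0::nat)} = {}" by auto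
  then show ?case by (simp only: sum.empty)
next
  case (Suc n)
  let ?A = "{(i,j). 1 \<le> i \<and> i < j \<and> j \<le> n}"
  have fin: "finite ?A"
    by (rule finite_subset[of _ "{1..n} \<times> {1..n}"]) auto
  have eq: "{(i,j). 1 \<le> i \<and> i < j \<and> j \<le> Suc n} = ?A \<union> (\<lambda>i. (i, Suc n)) ` {1..n}"
    by auto
  have disj: "?A \<inter> (\<lambda>i. (i, Suc n)) ` {1..n} = {}" by auto
  have "(\<Sum>(i,j)\<in>{(i,j). 1 \<le> i \<and> i < j \<and> j \<le> Suc n}. h i + h j)
      = (\<Sum>(i,j)\<in>?A. h i + h j) + (\<Sum>(i,j)\<in>(\<lambda>i. (i, Suc n)) ` {1..n}. h i + h j)"
    unfolding eq by (rule sum.union_disjoint[OF fin _ disj]) auto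
  also have "(\<Sum>(i,j)\<in>(\<lambda>i. (i, Suc n)) ` {1..n}. h i + h j) = (\<Sum>i=1..n. h i + h (Suc n))"
    by (subst sum.reindex) (auto simp: inj_on_def)
  also have "\<dots> = (\<Sum>i=1..n. h i) + real n * h (Suc n)"
    by (simp add: sum.distrib)
  finally show ?case using Suc.IH
    by (cases n) (simp_all add: algebra_simps)
qed


lemma low_term:
  fixes A B c :: real
  assumes "c \<ge> 2" "A \<ge> c" "B \<ge> c"
  shows "1 / (A + B) \<le> (c + 2) / (4 * c) * (1 / (A + 2) + 1 / (B + 2))"
proof -
  have pos: "A > 0" "B > 0" "c > 0" "A+2 > 0" "B+2>0" using assms by auto
  have e: "(1/A + 1/B) / 4 = (A+B)/(4*A*B)" using pos by (simp add: field_simps)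
  have sq: "4*A*B \<le> (A+B)*(A+B)"
  proof -
    have "0 \<le> (A-B)*(A-B)" by simp
    then show ?thesis by (simp add: algebra_simps)
  qed
  have h1: "1 / (A + B) \<le> (1/A + 1/B) / 4"
    unfolding e using pos sq by (simp add: divide_simps)
  have hA: "1/A \<le> (c+2)/c * (1/(A+2))"
  proof -
    have "(c+2)/c * (1/(A+2)) - 1/A = 2*(A-c)/(c*A*(A+2))"
    proof -
      have "c*(A+2) > 0" "A*c+c*2 > 0" "A*(A*c) + A*(c*2) > 0" using pos by (simp_all add: add_pos_pos mult_pos_pos)
      then show ?thesis using pos by (simp add: field_simps)
    qed
    moreover have "2*(A-c)/(c*A*(A+2)) \<ge> 0" using pos assms by simp
    ultimately show ?thesis by linarith
  qed
  have hB: "1/B \<le> (c+2)/c * (1/(B+2))"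
  proof -
    have "(c+2)/c * (1/(B+2)) - 1/B = 2*(B-c)/(c*B*(B+2))"
    proof -
      have "c*(B+2) > 0" "B*c+c*2 > 0" "B*(B*c) + B*(c*2) > 0" using pos by (simp_all add: add_pos_pos mult_pos_pos)
      then show ?thesis using pos by (simp add: field_simps)
    qed
    moreover have "2*(B-c)/(c*B*(B+2)) \<ge> 0" using pos assms by simp
    ultimately show ?thesis by linarith
  qed
  have r: "(c + 2) / (4 * c) * (1 / (A + 2) + 1 / (B + 2)) = ((c+2)/c * (1/(A+2)) + (c+2)/c * (1/(B+2))) / 4"
  proof -
    have "\<And>u v. (c + 2) / (4 * c) * (u+v) = ((c+2)/c * u + (c+2)/c * v) / 4"
      using pos by (simp add: field_simps)
    then show ?thesis by blast
  qed
  have "(1/A + 1/B)/4 \<le> ((c+2)/c * (1/(A+2)) + (c+2)/c * (1/(B+2))) / 4"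
    using add_mono[OF hA hB] by (rule divide_right_mono) simp
  then show ?thesis unfolding r using h1 by (rule order_trans[rotated])
qed

lemma up_half:
  fixes A c M D :: real
  assumes "c \<ge> 2" "A \<ge> c" "A \<le> M" "(M + c) * 8 \<le> D * (c + 2)" "D \<ge> 8"
  shows "8 / D * (1/(A+2)) \<le> 1/(A+M)"
proof -
  have pos: "D > 0" "A + 2 > 0" "A + M > 0" using assms by auto
  have "(A + M) * 8 \<le> D * (A + 2)"
  proof -
    have "(A + M) * 8 = (M + c) * 8 + (A - c) * 8" by (simp add: algebra_simps)
    also have "\<dots> \<le> D * (c + 2) + (A - c) * 8" using assms by simp
    also have "(A - c) * 8 \<le> D * (A - c)"
      using mult_right_mono[of 8 D "A - c"] assms by (simp add: mult.commute)
    then have "D * (c + 2) + (A - c) * 8 \<le> D * (c+2) + D * (A - c)" by simp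
    finally show ?thesis by (simp add: algebra_simps)
  qed
  then have "8 / (D * (A+2)) \<le> 1/(A+M)"
    using pos by (simp add: divide_simps mult_pos_pos mult.commute)
  then show ?thesis by simp
qed

lemma up_term:
  fixes A B c M D :: real
  assumes "c \<ge> 2" "A \<ge> c" "B \<ge> c" "A \<le> M" "B \<le> M" "(M + c) * 8 \<le> D * (c + 2)" "D \<ge> 8"
  shows "4 / D * (1 / (A + 2) + 1 / (B + 2)) \<le> 1 / (A + B)"
proof -
  have a: "8 / D * (1/(A+2)) \<le> 1/(A+M)" using up_half[of c A M D] assms by blast
  have b: "8 / D * (1/(B+2)) \<le> 1/(B+M)" using up_half[of c B M D] assms by blast
  have c1: "1/(A+M) \<le> 1/(A+B)" using assms by (intro divide_left_mono) auto
  have c2: "1/(B+M) \<le> 1/(A+B)" using assms by (intro divide_left_mono) auto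
  have e: "4 / D * (1 / (A + 2) + 1 / (B + 2)) = (8 / D * (1/(A+2)) + 8 / D * (1/(B+2))) / 2"
    by (simp add: algebra_simps)
  have "8 / D * (1/(A+2)) + 8 / D * (1/(B+2)) \<le> 1/(A+B) + 1/(A+B)"
    using add_mono[OF order_trans[OF a c1] order_trans[OF b c2]] .
  then show ?thesis unfolding e by simp
qed

theorem corollary3p4:
  fixes k \<Delta> :: nat and x :: "nat \<Rightarrow> nat"
  assumes "3 \<le> k" and "k \<le> \<Delta>"
    and "\<And>j. j \<in> {1..k} \<Longrightarrow> 1 \<le> x j \<and> x j \<le> \<Delta>"
  shows "2 / (real \<Delta> - 1) * (\<Sum>(i,j)\<in>{(i,j). 1 \<le> i \<and> i < j \<and> j \<le> k}. 1 / (real (x i) + real (x j) + 2 * real k - 4))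
           \<le> (\<Sum>j=1..k. 1 / (real (x j) + real k))
         \<and> (\<Sum>j=1..k. 1 / (real (x j) + real k))
           \<le> (real \<Delta> + 3) / 4 * (\<Sum>(i,j)\<in>{(i,j). 1 \<le> i \<and> i < j \<and> j \<le> k}. 1 / (real (x i) + real (x j) + 2 * real k - 4))"
proof -
  let ?I = "{(i,j). 1 \<le> i \<and> i < j \<and> j \<le> k}"
  define P where "P = (\<Sum>(i,j)\<in>?I. 1 / (real (x i) + real (x j) + 2 * real k - 4))"
  define S where "S = (\<Sum>j=1..k. 1 / (real (x j) + real k))"
  define g where "g = (\<lambda>j. 1 / (real (x j) + real k))"
  define c where "c = real k - 1"
  define M where "M = real \<Delta> + real k - 2"
  define D where "D = (real \<Delta> + 3) * (real k - 1)"
  have k3: "real k \<ge> 3" and kD: "real k \<le> real \<Delta>" using assms by auto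
  have c2: "c \<ge> 2" unfolding c_def using k3 by simp
  have Dpos: "D \<ge> 8" unfolding D_def
  proof -
    have "6 * 2 \<le> (real \<Delta> + 3) * (real k - 1)"
      by (rule mult_mono) (use k3 kD in auto)
    then show "8 \<le> (real \<Delta> + 3) * (real k - 1)" by simp
  qed
  have MD: "(M + c) * 8 \<le> D * (c + 2)"
  proof -
    have "0 \<le> (real k - 3) * ((real \<Delta> + 3) * (real k + 3) - 16)"
    proof (rule mult_nonneg_nonneg)
      have "6 * 6 \<le> (real \<Delta> + 3) * (real k + 3)"
        by (rule mult_mono) (use k3 kD in auto)
      then show "0 \<le> (real \<Delta> + 3) * (real k + 3) - 16" by simp
    qed (use k3 in simp)
    then show ?thesis unfolding M_def c_def D_def by (simp add: algebra_simps)
  qed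
  have mem: "\<And>p. p \<in> ?I \<Longrightarrow> fst p \<in> {1..k} \<and> snd p \<in> {1..k}" by auto
  have Abnd: "\<And>j. j \<in> {1..k} \<Longrightarrow> c \<le> real (x j) + real k - 2 \<and> real (x j) + real k - 2 \<le> M"
  proof -
    fix j assume "j \<in> {1..k}"
    then have "1 \<le> x j" "x j \<le> \<Delta>" using assms(3) by auto
    then have "1 \<le> real (x j)" "real (x j) \<le> real \<Delta>" by auto
    then show "c \<le> real (x j) + real k - 2 \<and> real (x j) + real k - 2 \<le> M"
      unfolding c_def M_def by simp
  qed
  have rw1: "\<And>i j. real (x i) + real (x j) + 2 * real k - 4 = (real (x i) + real k - 2) + (real (x j) + real k - 2)"
    by simp
  have rw2: "\<And>j. g j = 1 / ((real (x j) + real k - 2) + 2)" unfolding g_def by simp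
  have SG: "S = (\<Sum>j=1..k. g j)" unfolding S_def g_def ..
  have pairs: "(\<Sum>(i,j)\<in>?I. g i + g j) = c * S"
    unfolding SG c_def using pair_sum[of g k] assms(1) by (simp add: of_nat_diff)
  have low: "P \<le> (c + 2) / (4 * c) * (c * S)"
  proof -
    have "P \<le> (\<Sum>(i,j)\<in>?I. (c + 2) / (4 * c) * (g i + g j))"
      unfolding P_def
    proof (rule sum_mono)
      fix p assume "p \<in> ?I"
      then obtain i j where p: "p = (i,j)" and ij: "i \<in> {1..k}" "j \<in> {1..k}" by auto
      show "(case p of (i, j) \<Rightarrow> 1 / (real (x i) + real (x j) + 2 * real k - 4))
            \<le> (case p of (i, j) \<Rightarrow> (c + 2) / (4 * c) * (g i + g j))"
        unfolding p using low_term[OF c2] Abnd[OF ij(1)] Abnd[OF ij(2)]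
        by (simp only: prod.case rw1 rw2)
    qed
    also have "\<dots> = (c + 2) / (4 * c) * (\<Sum>(i,j)\<in>?I. g i + g j)"
      by (simp add: sum_distrib_left case_prod_unfold)
    finally show ?thesis unfolding pairs .
  qed
  have up: "4 / D * (c * S) \<le> P"
  proof -
    have "4 / D * (c * S) = (\<Sum>(i,j)\<in>?I. 4 / D * (g i + g j))"
      unfolding pairs[symmetric] by (simp add: sum_distrib_left case_prod_unfold)
    also have "\<dots> \<le> P"
      unfolding P_def
    proof (rule sum_mono)
      fix p assume "p \<in> ?I"
      then obtain i j where p: "p = (i,j)" and ij: "i \<in> {1..k}" "j \<in> {1..k}" by auto
      show "(case p of (i, j) \<Rightarrow> 4 / D * (g i + g j))
            \<le> (case p of (i, j) \<Rightarrow> 1 / (real (x i) + real (x j) + 2 * real k - 4))"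
        unfolding p using up_term[OF c2 _ _ _ _ MD Dpos] Abnd[OF ij(1)] Abnd[OF ij(2)]
        by (simp only: prod.case rw1 rw2)
    qed
    finally show ?thesis .
  qed
  have Snn: "S \<ge> 0" unfolding S_def by (intro sum_nonneg) simp
  have cpos: "c > 0" using c2 by simp
  have e1: "(c + 2) / (4 * c) * (c * S) = (real k + 1) / 4 * S"
    using cpos unfolding c_def by (simp add: field_simps)
  have e2: "4 / D * (c * S) = 4 / (real \<Delta> + 3) * S"
  proof -
    have "D = (real \<Delta> + 3) * c" unfolding D_def c_def ..
    moreover have "c * real \<Delta> + c * 3 > 0" using cpos by (intro add_nonneg_pos) simp_all
    ultimately show ?thesis using cpos by (simp add: field_simps)
  qed
  have Dm: "real \<Delta> - 1 > 0" using k3 kD by simp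
  have part1: "2 / (real \<Delta> - 1) * P \<le> S"
  proof -
    have "2 / (real \<Delta> - 1) * P \<le> 2 / (real \<Delta> - 1) * ((real k + 1) / 4 * S)"
      using low e1 Dm by (intro mult_left_mono) auto
    also have "\<dots> = ((real k + 1) / (2 * (real \<Delta> - 1))) * S"
    proof -
      have "real \<Delta> * 4 - 4 > 0" "real \<Delta> * 2 - 2 > 0" using Dm by simp_all
      then show ?thesis using Dm by (simp add: field_simps)
    qed
    also have "\<dots> \<le> 1 * S"
      using Dm k3 kD Snn by (intro mult_right_mono) (auto simp: divide_simps)
    finally show ?thesis by simp
  qed
  have part2: "S \<le> (real \<Delta> + 3) / 4 * P"
  proof -
    have "4 / (real \<Delta> + 3) * S \<le> P" using up e2 by simp
    then have "(real \<Delta> + 3) / 4 * (4 / (real \<Delta> + 3) * S) \<le> (real \<Delta> + 3) / 4 * P"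
      by (intro mult_left_mono) auto
    then show ?thesis by simp
  qed
  show ?thesis using part1 part2 unfolding P_def S_def by blast
qed

end
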